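(* Let $k\ge1$ and let $S_1,\dots,S_k\in\mathcal{B}_A(\mathcal{H})$. Then for every positive integer $n$, $$\omega_A^{2n}\Big(\sum_{i=1}^kS_i\Big)\le\frac{k^{2n-1}}{2}\Big\|\sum_{i=1}^k\Big(\big(S_i^{\sharp_A}S_i\big)^n+\big(S_iS_i^{\sharp_A}\big)^n\Big)\Big\|_A.$$
   Context: $\mathcal{H}$ is a complex Hilbert space with inner product $\langle\cdot,\cdot\rangle$, and $A$ is a fixed nonzero positive bounded operator on $\mathcal{H}$. Set $\langle x,y\rangle_A=\langle Ax,y\rangle$ and $\|x\|_A=\|A^{1/2}x\|$. $\mathcal{B}_A(\mathcal{H})$ is the set of bounded operators $T$ for which there exists a bounded $S$ with $\langle Tx,y\rangle_A=\langle x,Sy\rangle_A$ for all $x,y$ (equivalently $\mathcal{R}(T^*A)\subseteq\mathcal{R}(A)$). For $T\in\mathcal{B}_A(\mathcal{H})$, $T^{\sharp_A}=A^\dagger T^*A$ ($A^\dagger$ the Moore–Penrose inverse) is the reduced solution of $AX=T^*A$. For an operator $T$ with $\|Tx\|_A\le\lambda\|x\|_A$ for some $\lambda>0$ and all $x$, $\|T\|_A=\sup\{\|Tx\|_A: \|x\|_A=1\}$, and $\omega_A(T)=\sup\{|\langle Tx,x\rangle_A|:\|x\|_A=1\}$. *)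

theory Defs
  imports "HOL-Analysis.Analysis"
begin

class complex_vector = real_vector +
  fixes scaleC :: "complex \<Rightarrow> 'a \<Rightarrow> 'a"
  assumes scaleC_add_right: "scaleC a (x + y) = scaleC a x + scaleC a y"
    and scaleC_add_left: "scaleC (a + b) x = scaleC a x + scaleC b x"
    and scaleC_scaleC: "scaleC a (scaleC b x) = scaleC (a * b) x"
    and scaleC_one: "scaleC 1 x = x"
    and scaleR_scaleC: "scaleR r x = scaleC (complex_of_real r) x"

class complex_inner = complex_vector + real_normed_vector +
  fixes cinner :: "'a \<Rightarrow> 'a \<Rightarrow> complex"
  assumes cinner_commute: "cinner x y = cnj (cinner y x)"
    and cinner_add_left: "cinner (x + y) z = cinner x z + cinner y z"
    and cinner_scaleC_left: "cinner (scaleC c x) y = c * cinner x y"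
    and cinner_ge_zero: "0 \<le> Re (cinner x x)"
    and cinner_eq_zero_iff: "cinner x x = 0 \<longleftrightarrow> x = 0"
    and norm_eq_sqrt_cinner: "norm x = sqrt (Re (cinner x x))"

class chilbert_space = complex_inner + complete_space

definition bounded_op :: "('a::complex_inner \<Rightarrow> 'a) \<Rightarrow> bool" where
  "bounded_op T \<longleftrightarrow> (\<forall>x y. T (x + y) = T x + T y) \<and> (\<forall>c x. T (scaleC c x) = scaleC c (T x))
     \<and> (\<exists>K. \<forall>x. norm (T x) \<le> K * norm x)"

definition cadj :: "('a::complex_inner \<Rightarrow> 'a) \<Rightarrow> ('a \<Rightarrow> 'a)" where
  "cadj T = (THE S. \<forall>x y. cinner (T x) y = cinner x (S y))"

definition positive_op :: "('a::complex_inner \<Rightarrow> 'a) \<Rightarrow> bool" where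
  "positive_op A \<longleftrightarrow> bounded_op A \<and> (\<forall>x. Im (cinner (A x) x) = 0 \<and> 0 \<le> Re (cinner (A x) x))"

definition A_inner :: "('a::complex_inner \<Rightarrow> 'a) \<Rightarrow> 'a \<Rightarrow> 'a \<Rightarrow> complex" where
  "A_inner A x y = cinner (A x) y"

definition A_norm :: "('a::complex_inner \<Rightarrow> 'a) \<Rightarrow> 'a \<Rightarrow> real" where
  "A_norm A x = sqrt (Re (cinner (A x) x))"

definition in_BA :: "('a::complex_inner \<Rightarrow> 'a) \<Rightarrow> ('a \<Rightarrow> 'a) \<Rightarrow> bool" where
  "in_BA A T \<longleftrightarrow> bounded_op T \<and>
     (\<exists>S. bounded_op S \<and> (\<forall>x y. A_inner A (T x) y = A_inner A x (S y)))"

text \<open>T^{sharp_A} = A^dagger T^* A, the reduced solution of A X = T^* A, i.e. the unique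
  bounded solution whose range lies in the closure of the range of A.\<close>
definition sharpA :: "('a::complex_inner \<Rightarrow> 'a) \<Rightarrow> ('a \<Rightarrow> 'a) \<Rightarrow> ('a \<Rightarrow> 'a)" where
  "sharpA A T = (THE X. bounded_op X \<and> (\<forall>x. A (X x) = cadj T (A x)) \<and> range X \<subseteq> closure (range A))"

definition A_opnorm :: "('a::complex_inner \<Rightarrow> 'a) \<Rightarrow> ('a \<Rightarrow> 'a) \<Rightarrow> real" where
  "A_opnorm A T = Sup {A_norm A (T x) | x. A_norm A x = 1}"

definition A_numrad :: "('a::complex_inner \<Rightarrow> 'a) \<Rightarrow> ('a \<Rightarrow> 'a) \<Rightarrow> real" where
  "A_numrad A T = Sup {cmod (A_inner A (T x) x) | x. A_norm A x = 1}"

end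

theory Submission
  imports Defs
begin

lemma scaleC_zero_right [simp]: "scaleC c (0::'a::complex_vector) = 0"
proof -
  have "scaleC c (0::'a) = scaleC c 0 + scaleC c 0" by (metis add_0 scaleC_add_right)
  then show ?thesis by simp
qed

lemma scaleC_zero_left [simp]: "scaleC 0 (x::'a::complex_vector) = 0"
  by (metis scaleR_scaleC scaleR_zero_left of_real_0)

lemma scaleC_minus_left: "scaleC (- c) (x::'a::complex_vector) = - scaleC c x"
proof -
  have "scaleC (- c) x + scaleC c x = 0" by (metis scaleC_add_left add.left_inverse scaleC_zero_left)
  then show ?thesis by (simp add: eq_neg_iff_add_eq_0)
qed

lemma scaleC_minus1: "scaleC (-1) (x::'a::complex_vector) = - x"
  by (simp add: scaleC_minus_left scaleC_one)

lemma scaleC_diff_right: "scaleC c (x - y) = scaleC c x - scaleC c (y::'a::complex_vector)"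
  by (metis add_diff_cancel diff_add_cancel scaleC_add_right)

lemma cinner_add_right: "cinner x (y + z) = cinner x y + cinner x (z::'a::complex_inner)"
  by (metis cinner_add_left cinner_commute complex_cnj_add)

lemma cinner_scaleC_right: "cinner x (scaleC c y) = cnj c * cinner x (y::'a::complex_inner)"
  by (metis cinner_commute cinner_scaleC_left complex_cnj_mult)

lemma cinner_zero_left [simp]: "cinner 0 (y::'a::complex_inner) = 0"
  by (metis scaleC_zero_left cinner_scaleC_left mult_zero_left)

lemma cinner_zero_right [simp]: "cinner y (0::'a::complex_inner) = 0"
  by (metis cinner_commute cinner_zero_left complex_cnj_zero)

lemma cinner_diff_left: "cinner (x - y) z = cinner x z - cinner y (z::'a::complex_inner)"
  by (metis add_diff_cancel_right' cinner_add_left diff_add_cancel)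

lemma cinner_diff_right: "cinner z (x - y) = cinner z x - cinner z (y::'a::complex_inner)"
  by (metis add_diff_cancel_right' cinner_add_right diff_add_cancel)

lemma cinner_minus_left: "cinner (- x) z = - cinner x (z::'a::complex_inner)"
  by (metis cinner_diff_left cinner_zero_left diff_0)

lemma cinner_minus_right: "cinner z (- x) = - cinner z (x::'a::complex_inner)"
  by (metis cinner_diff_right cinner_zero_right diff_0)

lemma cinner_scaleR_left: "cinner (scaleR r x) y = complex_of_real r * cinner x (y::'a::complex_inner)"
  by (simp add: scaleR_scaleC cinner_scaleC_left)

lemma cinner_scaleR_right: "cinner y (scaleR r x) = complex_of_real r * cinner y (x::'a::complex_inner)"
  by (simp add: scaleR_scaleC cinner_scaleC_right)

lemma cinner_self_Im [simp]: "Im (cinner x (x::'a::complex_inner)) = 0"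
  by (metis cinner_commute cnj.simps(2) neg_equal_zero)

lemma cinner_self_real: "cinner x x = complex_of_real (Re (cinner x (x::'a::complex_inner)))"
  by (simp add: complex_eq_iff)

lemma norm_sq_cinner: "(norm x)^2 = Re (cinner x (x::'a::complex_inner))"
  by (simp add: norm_eq_sqrt_cinner cinner_ge_zero)

lemma cinner_ext: "(\<And>z. cinner z x = cinner z (y::'a::complex_inner)) \<Longrightarrow> x = y"
  by (metis cinner_diff_right cinner_eq_zero_iff diff_eq_eq diff_self add_0)

lemma cinner_sum_left: "cinner (\<Sum>i\<in>I. f i) (y::'a::complex_inner) = (\<Sum>i\<in>I. cinner (f i) y)"
  by (induct I rule: infinite_finite_induct) (auto simp: cinner_add_left)

lemma cinner_sum_right: "cinner y (\<Sum>i\<in>I. f i) = (\<Sum>i\<in>I. cinner y (f i::'a::complex_inner))"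
  by (induct I rule: infinite_finite_induct) (auto simp: cinner_add_right)

section \<open>Hermitian forms and Cauchy-Schwarz\<close>

definition herm_form :: "('a::complex_vector \<Rightarrow> 'a \<Rightarrow> complex) \<Rightarrow> bool" where
  "herm_form B \<longleftrightarrow> (\<forall>x y z. B (x+y) z = B x z + B y z) \<and> (\<forall>c x y. B (scaleC c x) y = c * B x y)
     \<and> (\<forall>x y. B x y = cnj (B y x)) \<and> (\<forall>x. 0 \<le> Re (B x x))"

lemma herm_add_left: "herm_form B \<Longrightarrow> B (x+y) z = B x z + B y z"
  unfolding herm_form_def by blast
lemma herm_scale_left: "herm_form B \<Longrightarrow> B (scaleC c x) y = c * B x y"
  unfolding herm_form_def by blast
lemma herm_sym: "herm_form B \<Longrightarrow> B x y = cnj (B y x)"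
  unfolding herm_form_def by blast
lemma herm_pos: "herm_form B \<Longrightarrow> 0 \<le> Re (B x x)"
  unfolding herm_form_def by blast
lemma herm_add_right: "herm_form B \<Longrightarrow> B z (x+y) = B z x + B z y"
  by (simp add: herm_sym[of B z "x+y"] herm_sym[of B z x] herm_sym[of B z y] herm_add_left[of B x y z])
lemma herm_scale_right: "herm_form B \<Longrightarrow> B y (scaleC c x) = cnj c * B y x"
  by (simp add: herm_sym[of B y "scaleC c x"] herm_sym[of B y x] herm_scale_left[of B c x y])
lemma herm_self_real: "herm_form B \<Longrightarrow> B x x = complex_of_real (Re (B x x))"
proof -
  assume h: "herm_form B"
  have "B x x = cnj (B x x)" using herm_sym[OF h, of x x] .
  then have "Im (B x x) = 0" by (simp add: complex_eq_iff)
  then show ?thesis by (simp add: complex_eq_iff)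
qed

lemma herm_expand:
  assumes h: "herm_form B"
  shows "B (x + scaleC \<mu> y) (x + scaleC \<mu> y) = B x x + \<mu> * B y x + cnj \<mu> * B x y + \<mu> * cnj \<mu> * B y y"
  by (simp add: herm_add_left[OF h] herm_add_right[OF h] herm_scale_left[OF h] herm_scale_right[OF h] algebra_simps)

lemma herm_expand_real:
  assumes h: "herm_form B"
  shows "Re (B (x + scaleC (- (complex_of_real t * B x y)) y) (x + scaleC (- (complex_of_real t * B x y)) y))
       = Re (B x x) - 2 * t * (cmod (B x y))^2 + t^2 * (cmod (B x y))^2 * Re (B y y)"
proof -
  define c where "c = B x y"
  define \<mu> where "\<mu> = - (complex_of_real t * c)"
  have yx: "B y x = cnj c" using herm_sym[OF h, of y x] c_def by simp
  have yy: "B y y = complex_of_real (Re (B y y))" using herm_self_real[OF h] .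
  have cs: "c * cnj c = complex_of_real ((cmod c)^2)" by (rule complex_norm_square[symmetric])
  have t1: "\<mu> * B y x = - complex_of_real (t * (cmod c)^2)"
    unfolding yx \<mu>_def by (simp only: mult_minus_left mult.assoc cs of_real_mult)
  have t2: "cnj \<mu> * B x y = - complex_of_real (t * (cmod c)^2)"
  proof -
    have "cnj \<mu> * B x y = - (complex_of_real t * (c * cnj c))"
      unfolding \<mu>_def c_def by (simp add: mult.commute mult.left_commute)
    then show ?thesis by (simp only: cs of_real_mult)
  qed
  have t3: "\<mu> * cnj \<mu> * B y y = complex_of_real (t^2 * (cmod c)^2 * Re (B y y))"
  proof -
    have "\<mu> * cnj \<mu> = complex_of_real (t^2) * (c * cnj c)"
      unfolding \<mu>_def by (simp add: power2_eq_square mult.commute mult.left_commute)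
    then show ?thesis by (subst yy, simp only: cs of_real_mult)
  qed
  have "B (x + scaleC \<mu> y) (x + scaleC \<mu> y) = B x x + \<mu> * B y x + cnj \<mu> * B x y + \<mu> * cnj \<mu> * B y y"
    by (rule herm_expand[OF h])
  then have "Re (B (x + scaleC \<mu> y) (x + scaleC \<mu> y)) = Re (B x x) - t * (cmod c)^2 - t * (cmod c)^2 + t^2 * (cmod c)^2 * Re (B y y)"
    unfolding t1 t2 t3 by simp
  then show ?thesis unfolding \<mu>_def c_def by simp
qed

lemma quad_nonneg_imp:
  fixes a b s :: real
  assumes "\<And>t. 0 \<le> a - 2 * t * s + t^2 * s * b" "0 \<le> s" "0 \<le> b"
  shows "s \<le> a * b"
proof (cases "b = 0")
  case True
  show ?thesis
  proof (rule ccontr)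
    assume "\<not> s \<le> a * b"
    then have "s > 0" using True by simp
    have "0 \<le> a - 2 * ((a + 1) / (2 * s)) * s" using assms(1)[of "(a + 1) / (2 * s)"] True by simp
    also have "\<dots> = -1" using \<open>s > 0\<close> by (simp add: field_simps)
    finally show False by simp
  qed
next
  case False
  then have bp: "b > 0" using assms(3) by simp
  have "0 \<le> a - 2 * (1/b) * s + (1/b)^2 * s * b" using assms(1) .
  also have "\<dots> = (a * b - s) / b" using bp by (simp add: field_simps power2_eq_square)
  finally have "0 \<le> (a * b - s) / b" .
  then have "0 \<le> a * b - s" using bp by (simp add: zero_le_divide_iff)
  then show ?thesis by simp
qed

lemma herm_CS:
  assumes h: "herm_form B"
  shows "(cmod (B x y))^2 \<le> Re (B x x) * Re (B y y)"
proof -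
  have "\<And>t. 0 \<le> Re (B x x) - 2 * t * (cmod (B x y))^2 + t^2 * (cmod (B x y))^2 * Re (B y y)"
    using herm_expand_real[OF h] herm_pos[OF h] by metis
  then show ?thesis by (rule quad_nonneg_imp) (auto intro: herm_pos[OF h])
qed

lemma herm_CS':
  assumes h: "herm_form B"
  shows "cmod (B x y) \<le> sqrt (Re (B x x)) * sqrt (Re (B y y))"
proof -
  have "cmod (B x y) \<le> sqrt (Re (B x x) * Re (B y y))"
    using herm_CS[OF h, of x y] by (rule real_le_rsqrt)
  then show ?thesis by (simp add: real_sqrt_mult)
qed

lemma herm_cinner: "herm_form (cinner :: 'a::complex_inner \<Rightarrow> 'a \<Rightarrow> complex)"
  unfolding herm_form_def
  by (auto simp: cinner_add_left cinner_scaleC_left cinner_ge_zero intro: cinner_commute)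

lemma cinner_CS: "cmod (cinner x y) \<le> norm x * norm (y::'a::complex_inner)"
  using herm_CS'[OF herm_cinner, of x y] by (simp add: norm_eq_sqrt_cinner)

lemma norm_scaleC: "norm (scaleC c x) = cmod c * norm (x::'a::complex_inner)"
proof -
  have "cinner (scaleC c x) (scaleC c x) = (c * cnj c) * cinner x x"
    by (simp add: cinner_scaleC_left cinner_scaleC_right mult.assoc mult.left_commute)
  also have "\<dots> = complex_of_real ((cmod c)^2 * Re (cinner x x))"
    by (subst cinner_self_real, subst complex_norm_square[symmetric]) simp
  finally have "Re (cinner (scaleC c x) (scaleC c x)) = (cmod c)^2 * Re (cinner x x)" by simp
  then show ?thesis by (simp add: norm_eq_sqrt_cinner real_sqrt_mult)
qed

lemma bop_add: "bounded_op T \<Longrightarrow> T (x + y) = T x + T y"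
  unfolding bounded_op_def by blast
lemma bop_scaleC: "bounded_op T \<Longrightarrow> T (scaleC c x) = scaleC c (T x)"
  unfolding bounded_op_def by blast
lemma bop_bound: "bounded_op T \<Longrightarrow> \<exists>K>0. \<forall>x. norm (T x) \<le> K * norm x"
proof -
  assume "bounded_op T"
  then obtain K where K: "\<forall>x. norm (T x) \<le> K * norm x" unfolding bounded_op_def by blast
  have "\<forall>x. norm (T x) \<le> (max K 1) * norm x"
    by (metis K max.cobounded1 mult_right_mono norm_ge_zero order_trans)
  then show ?thesis by (intro exI[of _ "max K 1"]) auto
qed
lemma bop_scaleR: "bounded_op T \<Longrightarrow> T (scaleR r x) = scaleR r (T x)"
  by (simp add: scaleR_scaleC bop_scaleC)
lemma bop_bounded_linear: "bounded_op T \<Longrightarrow> bounded_linear T"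
proof -
  assume b: "bounded_op T"
  then obtain K where K: "\<forall>x. norm (T x) \<le> K * norm x" unfolding bounded_op_def by blast
  show ?thesis
    by (rule bounded_linear_intro[of _ K]) (use b K in \<open>auto simp: bop_add bop_scaleR mult.commute\<close>)
qed
lemma bop_zero [simp]: "bounded_op T \<Longrightarrow> T 0 = 0"
  using bop_bounded_linear linear_0 bounded_linear.linear by blast
lemma bop_diff: "bounded_op T \<Longrightarrow> T (x - y) = T x - T y"
  using bop_bounded_linear linear_diff bounded_linear.linear by blast
lemma bop_sum: "bounded_op T \<Longrightarrow> T (\<Sum>i\<in>I. f i) = (\<Sum>i\<in>I. T (f i))"
  by (induct I rule: infinite_finite_induct) (auto simp: bop_add)

lemma bop_id: "bounded_op (\<lambda>x. x)"
  unfolding bounded_op_def by (auto intro: exI[of _ 1])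

lemma bop_comp: "bounded_op S \<Longrightarrow> bounded_op T \<Longrightarrow> bounded_op (S \<circ> T)"
proof -
  assume s: "bounded_op S" and t: "bounded_op T"
  obtain K1 where K1: "K1 > 0" "\<forall>x. norm (S x) \<le> K1 * norm x" using bop_bound[OF s] by blast
  obtain K2 where K2: "K2 > 0" "\<forall>x. norm (T x) \<le> K2 * norm x" using bop_bound[OF t] by blast
  have "\<forall>x. norm (S (T x)) \<le> (K1 * K2) * norm x"
  proof
    fix x
    have "norm (S (T x)) \<le> K1 * norm (T x)" using K1 by blast
    also have "\<dots> \<le> K1 * (K2 * norm x)" using K1(1) K2(2) by (intro mult_left_mono) auto
    finally show "norm (S (T x)) \<le> (K1 * K2) * norm x" by (simp add: mult.assoc)
  qed
  then show ?thesis unfolding bounded_op_def using s t by (auto simp: bop_add bop_scaleC)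
qed

lemma bop_funpow: "bounded_op T \<Longrightarrow> bounded_op (T ^^ n)"
proof (induct n)
  case 0 then show ?case using bop_id by (simp add: id_def)
next
  case (Suc n)
  then have h: "bounded_op (T ^^ n)" by simp
  show ?case using bop_comp[OF Suc.prems h] by (simp add: comp_def)
qed

lemma bop_plus: "bounded_op S \<Longrightarrow> bounded_op T \<Longrightarrow> bounded_op (\<lambda>x. S x + T x)"
proof -
  assume s: "bounded_op S" and t: "bounded_op T"
  obtain K1 where K1: "K1 > 0" "\<forall>x. norm (S x) \<le> K1 * norm x" using bop_bound[OF s] by blast
  obtain K2 where K2: "K2 > 0" "\<forall>x. norm (T x) \<le> K2 * norm x" using bop_bound[OF t] by blast
  have "\<forall>x. norm (S x + T x) \<le> (K1 + K2) * norm x"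
  proof
    fix x
    have "norm (S x + T x) \<le> norm (S x) + norm (T x)" by (rule norm_triangle_ineq)
    also have "\<dots> \<le> K1 * norm x + K2 * norm x" using K1(2) K2(2) by (intro add_mono) auto
    finally show "norm (S x + T x) \<le> (K1 + K2) * norm x" by (simp add: distrib_right)
  qed
  then show ?thesis unfolding bounded_op_def using s t by (auto simp: bop_add bop_scaleC scaleC_add_right)
qed

lemma bop_sum_op: fixes F :: "'i \<Rightarrow> 'a::complex_inner \<Rightarrow> 'a" shows "(\<And>i. i \<in> I \<Longrightarrow> bounded_op (F i)) \<Longrightarrow> bounded_op (\<lambda>x. \<Sum>i\<in>I. F i x)"
proof (induct I rule: infinite_finite_induct)
  case (infinite I)
  have "(\<lambda>x. \<Sum>i\<in>I. F i x) = (\<lambda>x. 0)" using infinite by simp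
  moreover have "bounded_op (\<lambda>x::'a. 0::'a)" unfolding bounded_op_def by (simp, rule exI[of _ "0::real"], simp)
  ultimately show ?case by simp
next
  case empty
  have "bounded_op (\<lambda>x::'a. 0::'a)" unfolding bounded_op_def by (simp, rule exI[of _ "0::real"], simp)
  then show ?case by simp
next
  case (insert i I)
  then have "bounded_op (\<lambda>x. F i x + (\<Sum>i\<in>I. F i x))" by (intro bop_plus) auto
  then show ?case using insert by simp
qed

lemma polarization_sa:
  assumes b: "bounded_op B" and r: "\<And>x. Im (cinner (B x) x) = 0"
  shows "cinner (B x) y = cinner x (B y)"
proof -
  define a where "a = cinner (B x) y"
  define b' where "b' = cinner (B y) x"
  have e1: "cinner (B (x + y)) (x + y) = cinner (B x) x + a + b' + cinner (B y) y"
    unfolding a_def b'_def by (simp add: bop_add[OF b] cinner_add_left cinner_add_right)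
  have "Im (a + b') = 0" using r[of "x+y"] r[of x] r[of y] unfolding e1 by simp
  have e2: "cinner (B (x + scaleC \<i> y)) (x + scaleC \<i> y) = cinner (B x) x - \<i> * a + \<i> * b' + cinner (B y) y"
    unfolding a_def b'_def
    by (simp add: bop_add[OF b] bop_scaleC[OF b] cinner_add_left cinner_add_right cinner_scaleC_left cinner_scaleC_right algebra_simps)
  have "Im (- \<i> * a + \<i> * b') = 0" using r[of "x + scaleC \<i> y"] r[of x] r[of y] unfolding e2 by simp
  then have "Re a = Re b'" by simp
  moreover have "Im a = - Im b'" using \<open>Im (a + b') = 0\<close> by simp
  ultimately have "a = cnj b'" by (simp add: complex_eq_iff)
  then show ?thesis unfolding a_def b'_def by (metis cinner_commute)
qed

lemma pos_bop: "positive_op A \<Longrightarrow> bounded_op A"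
  unfolding positive_op_def by blast

lemma pos_sa: "positive_op A \<Longrightarrow> cinner (A x) y = cinner x (A y)"
  by (rule polarization_sa) (auto simp: positive_op_def)

lemma pos_herm: "positive_op A \<Longrightarrow> herm_form (\<lambda>x y. cinner (A x) y)"
  unfolding herm_form_def
proof (intro conjI allI)
  assume p: "positive_op A"
  note b = pos_bop[OF p]
  show "cinner (A (x + y)) z = cinner (A x) z + cinner (A y) z" for x y z
    by (simp add: bop_add[OF b] cinner_add_left)
  show "cinner (A (scaleC c x)) y = c * cinner (A x) y" for c x y
    by (simp add: bop_scaleC[OF b] cinner_scaleC_left)
  show "cinner (A x) y = cnj (cinner (A y) x)" for x y
    by (metis pos_sa[OF p] cinner_commute)
  show "0 \<le> Re (cinner (A x) x)" for x using p unfolding positive_op_def by blast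
qed

section \<open>Projection theorem\<close>

definition csubspace :: "'a::complex_vector set \<Rightarrow> bool" where
  "csubspace M \<longleftrightarrow> 0 \<in> M \<and> (\<forall>x\<in>M. \<forall>y\<in>M. x + y \<in> M) \<and> (\<forall>c. \<forall>x\<in>M. scaleC c x \<in> M)"

lemma csub_diff: "csubspace M \<Longrightarrow> x \<in> M \<Longrightarrow> y \<in> M \<Longrightarrow> x - y \<in> M"
  unfolding csubspace_def by (metis diff_conv_add_uminus scaleC_minus1)

lemma parallelogram:
  "(norm (x + y))^2 + (norm (x - y))^2 = 2 * (norm x)^2 + 2 * (norm (y::'a::complex_inner))^2"
  unfolding norm_sq_cinner
  by (simp add: cinner_add_left cinner_add_right cinner_diff_left cinner_diff_right)

lemma bounded_linear_cinner_left: "bounded_linear (\<lambda>x. cinner x (y::'a::complex_inner))"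
proof (rule bounded_linear_intro[of _ "norm y"])
  show "cinner (x + z) y = cinner x y + cinner z y" for x z by (rule cinner_add_left)
  show "cinner (r *\<^sub>R x) y = r *\<^sub>R cinner x y" for r x by (simp add: cinner_scaleR_left scaleR_conv_of_real)
  show "norm (cinner x y) \<le> norm x * norm y" for x by (rule cinner_CS)
qed

lemma orth_closure:
  assumes "\<And>m. m \<in> S \<Longrightarrow> cinner m (y::'a::complex_inner) = 0" "m \<in> closure S"
  shows "cinner m y = 0"
proof -
  have "continuous_on UNIV (\<lambda>x. cinner x y)" by (rule linear_continuous_on[OF bounded_linear_cinner_left])
  then have "closed {x. cinner x y = 0}"
    using closed_Collect_eq[of "\<lambda>x. cinner x y" "\<lambda>x. 0"] by (simp add: continuous_on_const)
  moreover have "S \<subseteq> {x. cinner x y = 0}" using assms(1) by blast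
  ultimately have "closure S \<subseteq> {x. cinner x y = 0}" by (rule closure_minimal[rotated])
  then show ?thesis using assms(2) by blast
qed

lemma proj_exists:
  fixes M :: "'a::chilbert_space set"
  assumes cl: "closed M" and sub: "csubspace M"
  shows "\<exists>p\<in>M. \<forall>m\<in>M. cinner (y - p) m = 0"
proof -
  define D where "D = {(norm (y - m))^2 | m. m \<in> M}"
  define d where "d = Inf D"
  have M0: "0 \<in> M" using sub unfolding csubspace_def by blast
  have Dne: "D \<noteq> {}" using M0 unfolding D_def by blast
  have Dbdd: "bdd_below D" unfolding D_def by (rule bdd_belowI[of _ 0]) auto
  have dle: "d \<le> (norm (y - m))^2" if "m \<in> M" for m
    unfolding d_def by (rule cInf_lower) (use that Dbdd D_def in auto)
  have "\<exists>m. m \<in> M \<and> (norm (y - m))^2 < d + inverse (real (Suc j))" for j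
  proof -
    have "Inf D < d + inverse (real (Suc j))" unfolding d_def by simp
    from cInf_lessD[OF Dne this] show ?thesis unfolding D_def by blast
  qed
  then obtain ms where ms: "\<And>j. ms j \<in> M" "\<And>j. (norm (y - ms j))^2 < d + inverse (real (Suc j))"
    by metis
  have par: "(norm (ms i - ms j))^2 \<le> 2 * inverse (real (Suc i)) + 2 * inverse (real (Suc j))" for i j
  proof -
    define u where "u = y - ms i"
    define v where "v = y - ms j"
    define mid where "mid = scaleR (1/2) (ms i + ms j)"
    have "mid \<in> M" unfolding mid_def scaleR_scaleC using sub ms(1) unfolding csubspace_def by blast
    then have "d \<le> (norm (y - mid))^2" by (rule dle)
    have "scaleR 2 (y - mid) = scaleR 2 y - (ms i + ms j)" unfolding mid_def by (simp add: scaleR_diff_right)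
    also have "\<dots> = u + v" unfolding u_def v_def by (simp add: scaleR_2 algebra_simps)
    finally have "u + v = scaleR 2 (y - mid)" by simp
    then have "(norm (u + v))^2 = 4 * (norm (y - mid))^2" by (simp add: power_mult_distrib)
    moreover have "u - v = ms j - ms i" unfolding u_def v_def by simp
    moreover have "norm (ms j - ms i) = norm (ms i - ms j)" by (rule norm_minus_commute)
    ultimately have "(norm (ms i - ms j))^2 = 2 * (norm u)^2 + 2 * (norm v)^2 - 4 * (norm (y - mid))^2"
      using parallelogram[of u v] by simp
    then show ?thesis using ms(2)[of i] ms(2)[of j] \<open>d \<le> (norm (y - mid))^2\<close> unfolding u_def v_def by simp
  qed
  have "Cauchy ms"
  proof (rule metric_CauchyI)
    fix e :: real assume "0 < e"
    obtain N where N: "4 / e^2 < real N" using reals_Archimedean2 by blast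
    have Npos: "0 < real N" using N \<open>0 < e\<close> by (smt (verit) divide_pos_pos zero_less_power)
    have "\<forall>m\<ge>N. \<forall>n\<ge>N. dist (ms m) (ms n) < e"
    proof (intro allI impI)
      fix m n assume "N \<le> m" "N \<le> n"
      have "inverse (real (Suc m)) \<le> inverse (real N)" using \<open>N \<le> m\<close> Npos by (simp add: le_imp_inverse_le)
      moreover have "inverse (real (Suc n)) \<le> inverse (real N)" using \<open>N \<le> n\<close> Npos by (simp add: le_imp_inverse_le)
      ultimately have "(norm (ms m - ms n))^2 \<le> 4 * inverse (real N)" using par[of m n] by simp
      also have "\<dots> < e^2" using N Npos \<open>0 < e\<close> by (simp add: field_simps)
      finally have "(norm (ms m - ms n))^2 < e^2" .
      then have "norm (ms m - ms n) < e" using \<open>0 < e\<close> by (simp add: power_less_imp_less_base)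
      then show "dist (ms m) (ms n) < e" by (simp add: dist_norm)
    qed
    then show "\<exists>M. \<forall>m\<ge>M. \<forall>n\<ge>M. dist (ms m) (ms n) < e" by blast
  qed
  then obtain p where lim: "ms \<longlonglongrightarrow> p" using Cauchy_convergent convergent_def by blast
  have pM: "p \<in> M" using closed_sequentially[OF cl ms(1) lim] .
  have "(\<lambda>j. (norm (y - ms j))^2) \<longlonglongrightarrow> (norm (y - p))^2"
    by (intro tendsto_intros lim)
  then have pd: "(norm (y - p))^2 \<le> d"
    using LIMSEQ_le[OF _ LIMSEQ_inverse_real_of_nat_add[of d]] ms(2) less_imp_le by blast
  have "cinner (y - p) m = 0" if mM: "m \<in> M" for m
  proof (rule ccontr)
    assume cne: "cinner (y - p) m \<noteq> 0"
    define z where "z = y - p"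
    define c where "c = cinner z m"
    define s where "s = 1 / ((norm m)^2 + 1)"
    have np: "0 < (norm m)^2 + 1" by (smt (verit) zero_le_power2)
    have spos: "s > 0" unfolding s_def using np by simp
    have sr: "s * (norm m)^2 < 1" unfolding s_def using np by (simp add: field_simps)
    have qpos: "(cmod c)^2 > 0" using cne unfolding c_def z_def by simp
    have "p + scaleC (complex_of_real s * c) m \<in> M"
      using sub pM mM unfolding csubspace_def by blast
    then have "d \<le> (norm (y - (p + scaleC (complex_of_real s * c) m)))^2" by (rule dle)
    also have "y - (p + scaleC (complex_of_real s * c) m) = z + scaleC (- (complex_of_real s * cinner z m)) m"
      unfolding z_def c_def by (simp add: scaleC_minus_left)
    also have "(norm \<dots>)^2 = Re (cinner z z) - 2 * s * (cmod c)^2 + s^2 * (cmod c)^2 * Re (cinner m m)"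
      unfolding norm_sq_cinner herm_expand_real[OF herm_cinner] c_def ..
    finally have "d \<le> (norm z)^2 - 2 * s * (cmod c)^2 + s^2 * (cmod c)^2 * (norm m)^2"
      by (simp add: norm_sq_cinner)
    then have "0 \<le> - 2 * s * (cmod c)^2 + s^2 * (cmod c)^2 * (norm m)^2" using pd unfolding z_def by simp
    then have "0 \<le> (s * (cmod c)^2) * (s * (norm m)^2 - 2)" by (simp add: algebra_simps power2_eq_square)
    moreover have sq: "s * (cmod c)^2 > 0" using spos qpos by (rule mult_pos_pos)
    ultimately have "0 \<le> s * (norm m)^2 - 2" by (simp add: zero_le_mult_iff)
    then show False using sr by simp
  qed
  then show ?thesis using pM by blast
qed

definition proj :: "'a::complex_inner set \<Rightarrow> 'a \<Rightarrow> 'a" where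
  "proj M y = (SOME p. p \<in> M \<and> (\<forall>m\<in>M. cinner (y - p) m = 0))"

lemma proj_prop:
  fixes M :: "'a::chilbert_space set"
  assumes "closed M" "csubspace M"
  shows "proj M y \<in> M \<and> (\<forall>m\<in>M. cinner (y - proj M y) m = 0)"
proof -
  have "\<exists>p. p \<in> M \<and> (\<forall>m\<in>M. cinner (y - p) m = 0)" using proj_exists[OF assms, of y] by blast
  then show ?thesis unfolding proj_def by (rule someI_ex)
qed

lemma proj_unique:
  assumes sub: "csubspace M" and p: "p \<in> M" "\<forall>m\<in>M. cinner (y - p) m = 0"
    and q: "q \<in> M" "\<forall>m\<in>M. cinner (y - q) m = 0"
  shows "p = (q::'a::complex_inner)"
proof -
  have pq: "p - q \<in> M" using csub_diff[OF sub p(1) q(1)] .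
  have "cinner (p - q) (p - q) = cinner ((y - q) - (y - p)) (p - q)" by simp
  also have "\<dots> = 0" using p(2) q(2) pq by (simp add: cinner_diff_left)
  finally have "p - q = 0" by (simp only: cinner_eq_zero_iff)
  then show ?thesis by simp
qed

lemma proj_eq:
  fixes M :: "'a::chilbert_space set"
  assumes "closed M" "csubspace M" "p \<in> M" "\<forall>m\<in>M. cinner (y - p) m = 0"
  shows "proj M y = p"
proof -
  have h: "proj M y \<in> M" "\<forall>m\<in>M. cinner (y - proj M y) m = 0" using proj_prop[OF assms(1,2)] by blast+
  show ?thesis by (rule proj_unique[OF assms(2) h(1) h(2) assms(3) assms(4)])
qed

lemma proj_bop:
  fixes M :: "'a::chilbert_space set"
  assumes cl: "closed M" and sub: "csubspace M"
  shows "bounded_op (proj M)"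
  unfolding bounded_op_def
proof (intro conjI allI)
  have PM: "proj M y \<in> M" for y using proj_prop[OF cl sub] by blast
  have PO: "cinner (y - proj M y) m = 0" if "m \<in> M" for y m using proj_prop[OF cl sub] that by blast
  have add: "a + b \<in> M" if "a \<in> M" "b \<in> M" for a b using sub that unfolding csubspace_def by blast
  have sc: "scaleC c a \<in> M" if "a \<in> M" for a c using sub that unfolding csubspace_def by blast
  show "proj M (x + y) = proj M x + proj M y" for x y
  proof (rule proj_eq[OF cl sub])
    show "proj M x + proj M y \<in> M" by (rule add[OF PM PM])
    show "\<forall>m\<in>M. cinner (x + y - (proj M x + proj M y)) m = 0"
    proof
      fix m assume m: "m \<in> M"
      show "cinner (x + y - (proj M x + proj M y)) m = 0"
        by (simp only: add_diff_add cinner_add_left PO[OF m]) simp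
    qed
  qed
  show "proj M (scaleC c x) = scaleC c (proj M x)" for c x
  proof (rule proj_eq[OF cl sub])
    show "scaleC c (proj M x) \<in> M" by (rule sc[OF PM])
    show "\<forall>m\<in>M. cinner (scaleC c x - scaleC c (proj M x)) m = 0"
    proof
      fix m assume m: "m \<in> M"
      show "cinner (scaleC c x - scaleC c (proj M x)) m = 0"
        by (simp only: scaleC_diff_right[symmetric] cinner_scaleC_left PO[OF m]) simp
    qed
  qed
  have "norm (proj M x) \<le> 1 * norm x" for x
  proof -
    define p where "p = proj M x"
    define w where "w = x - p"
    have wp: "cinner w p = 0" unfolding w_def p_def by (rule PO[OF PM])
    have pw: "cinner p w = 0" using wp cinner_commute[of p w] by simp
    have "x = p + w" unfolding w_def by simp
    then have "(norm x)^2 = (norm p)^2 + (norm w)^2"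
      unfolding norm_sq_cinner by (simp add: cinner_add_left cinner_add_right wp pw)
    then have "(norm p)^2 \<le> (norm x)^2" by simp
    then have "norm p \<le> norm x" by (rule power2_le_imp_le) simp
    then show ?thesis unfolding p_def by simp
  qed
  then show "\<exists>K. \<forall>x. norm (proj M x) \<le> K * norm x" by blast
qed

lemma bounded_linear_scaleC: "bounded_linear (scaleC c :: 'a::complex_inner \<Rightarrow> 'a)"
proof (rule bounded_linear_intro[of _ "cmod c"])
  show "scaleC c (x + y) = scaleC c x + scaleC c y" for x y :: 'a by (rule scaleC_add_right)
  show "scaleC c (r *\<^sub>R x) = r *\<^sub>R scaleC c x" for r and x :: 'a
    by (simp add: scaleR_scaleC scaleC_scaleC mult.commute)
  show "norm (scaleC c x) \<le> norm x * cmod c" for x :: 'a by (simp add: norm_scaleC mult.commute)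
qed

lemma closure_range_csubspace:
  fixes A :: "'a::complex_inner \<Rightarrow> 'a"
  assumes b: "bounded_op A"
  shows "csubspace (closure (range A))"
  unfolding csubspace_def
proof (intro conjI ballI allI)
  have z: "A 0 = 0" by (rule bop_zero[OF b])
  have "A 0 \<in> closure (range A)" by (rule subsetD[OF closure_subset rangeI])
  then show "0 \<in> closure (range A)" by (simp only: z)
  show "x + y \<in> closure (range A)" if xc: "x \<in> closure (range A)" and yc: "y \<in> closure (range A)" for x y
  proof -
    obtain f where f1: "\<forall>n. f n \<in> range A" and f2: "f \<longlonglongrightarrow> x"
      using xc unfolding closure_sequential by blast
    obtain g where g1: "\<forall>n. g n \<in> range A" and g2: "g \<longlonglongrightarrow> y"
      using yc unfolding closure_sequential by blast
    have r: "\<forall>n. f n + g n \<in> range A"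
    proof
      fix n
      obtain u where u: "f n = A u" using f1 by blast
      obtain v where v: "g n = A v" using g1 by blast
      have "f n + g n = A (u + v)" unfolding u v by (rule bop_add[OF b, symmetric])
      then show "f n + g n \<in> range A" by (simp only: rangeI)
    qed
    have l: "(\<lambda>n. f n + g n) \<longlonglongrightarrow> x + y" using f2 g2 by (rule tendsto_add)
    have "\<exists>h. (\<forall>n. h n \<in> range A) \<and> h \<longlonglongrightarrow> x + y"
      by (rule exI[of _ "\<lambda>n. f n + g n"], rule conjI[OF r l])
    then show ?thesis by (simp only: closure_sequential)
  qed
  show "scaleC c x \<in> closure (range A)" if xc: "x \<in> closure (range A)" for c x
  proof -
    obtain f where f1: "\<forall>n. f n \<in> range A" and f2: "f \<longlonglongrightarrow> x"
      using xc unfolding closure_sequential by blast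
    have r: "\<forall>n. scaleC c (f n) \<in> range A"
    proof
      fix n
      obtain u where u: "f n = A u" using f1 by blast
      have "scaleC c (f n) = A (scaleC c u)" unfolding u by (rule bop_scaleC[OF b, symmetric])
      then show "scaleC c (f n) \<in> range A" by (simp only: rangeI)
    qed
    have l: "(\<lambda>n. scaleC c (f n)) \<longlonglongrightarrow> scaleC c x"
      using bounded_linear.tendsto[OF bounded_linear_scaleC f2] .
    have "\<exists>h. (\<forall>n. h n \<in> range A) \<and> h \<longlonglongrightarrow> scaleC c x"
      by (rule exI[of _ "\<lambda>n. scaleC c (f n)"], rule conjI[OF r l])
    then show ?thesis by (simp only: closure_sequential)
  qed
qed

section \<open>Riesz representation and adjoints\<close>

lemma riesz:
  fixes f :: "'a::chilbert_space \<Rightarrow> complex"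
  assumes add: "\<And>x y. f (x + y) = f x + f y" and sc: "\<And>c x. f (scaleC c x) = c * f x"
    and bd: "\<And>x. cmod (f x) \<le> K * norm x"
  shows "\<exists>w. \<forall>x. f x = cinner x w"
proof (cases "\<forall>x. f x = 0")
  case True then show ?thesis by (intro exI[of _ 0]) simp
next
  case False
  then obtain z where fz: "f z \<noteq> 0" by blast
  have f0: "f 0 = 0" using add[of 0 0] by simp
  have fdiff: "f (x - y) = f x - f y" for x y using add[of "x - y" y] by simp
  have bl: "bounded_linear f"
  proof (rule bounded_linear_intro[of _ K])
    show "f (x + y) = f x + f y" for x y by (rule add)
    show "f (r *\<^sub>R x) = r *\<^sub>R f x" for r x by (simp add: scaleR_scaleC sc scaleR_conv_of_real)
    show "norm (f x) \<le> norm x * K" for x using bd[of x] by (simp add: mult.commute)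
  qed
  define N where "N = {x. f x = 0}"
  have "continuous_on UNIV f" by (rule linear_continuous_on[OF bl])
  then have cl: "closed N" unfolding N_def using closed_Collect_eq[of f "\<lambda>x. 0"] by (simp add: continuous_on_const)
  have sub: "csubspace N" unfolding csubspace_def N_def by (simp add: add sc f0)
  define u where "u = z - proj N z"
  have pr: "proj N z \<in> N \<and> (\<forall>m\<in>N. cinner (z - proj N z) m = 0)" by (rule proj_prop[OF cl sub])
  have pN: "proj N z \<in> N" using pr by blast
  have orth: "cinner u m = 0" if "m \<in> N" for m using pr that unfolding u_def by blast
  have fu: "f u = f z" unfolding u_def fdiff using pN unfolding N_def by simp
  have uu: "cinner u u \<noteq> 0"
  proof
    assume "cinner u u = 0"
    then have "u = 0" by (simp add: cinner_eq_zero_iff)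
    then show False using fu fz f0 by simp
  qed
  have key: "f x * cinner u u = f u * cinner x u" for x
  proof -
    define v where "v = scaleC (f x) u - scaleC (f u) x"
    have "f v = 0" unfolding v_def fdiff sc by (simp add: mult.commute)
    then have "v \<in> N" unfolding N_def by simp
    then have "cinner u v = 0" by (rule orth)
    then have "cinner v u = 0" using cinner_commute[of v u] by simp
    then show ?thesis unfolding v_def by (simp add: cinner_diff_left cinner_scaleC_left)
  qed
  define w where "w = scaleC (cnj (f u / cinner u u)) u"
  have "f x = cinner x w" for x
  proof -
    have "cinner x w = f u / cinner u u * cinner x u" unfolding w_def by (simp add: cinner_scaleC_right)
    also have "\<dots> = f x" using key[of x] uu by (simp add: field_simps)
    finally show ?thesis by simp
  qed
  then show ?thesis by blast
qed

lemma cadj_prop: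
  fixes T :: "'a::chilbert_space \<Rightarrow> 'a"
  assumes b: "bounded_op T"
  shows "cinner (T x) y = cinner x (cadj T y)"
proof -
  obtain K where K: "K > 0" "\<forall>x. norm (T x) \<le> K * norm x" using bop_bound[OF b] by blast
  have "\<forall>y. \<exists>w. \<forall>x. cinner (T x) y = cinner x w"
  proof
    fix y
    show "\<exists>w. \<forall>x. cinner (T x) y = cinner x w"
    proof (rule riesz[of _ "K * norm y"])
      show "cinner (T (x + z)) y = cinner (T x) y + cinner (T z) y" for x z
        by (simp add: bop_add[OF b] cinner_add_left)
      show "cinner (T (scaleC c x)) y = c * cinner (T x) y" for c x
        by (simp add: bop_scaleC[OF b] cinner_scaleC_left)
      show "cmod (cinner (T x) y) \<le> K * norm y * norm x" for x
      proof -
        have "cmod (cinner (T x) y) \<le> norm (T x) * norm y" by (rule cinner_CS)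
        also have "\<dots> \<le> (K * norm x) * norm y" using K(2) by (intro mult_right_mono) auto
        finally show ?thesis by (simp add: mult_ac)
      qed
    qed
  qed
  then have "\<exists>S. \<forall>y. \<forall>x. cinner (T x) y = cinner x (S y)" by (rule choice)
  then obtain S where S: "\<forall>y x. cinner (T x) y = cinner x (S y)" by blast
  have "\<exists>!S. \<forall>x y. cinner (T x) y = cinner x (S y)"
  proof (rule ex1I[of _ S])
    show "\<forall>x y. cinner (T x) y = cinner x (S y)" using S by blast
    fix S' assume S': "\<forall>x y. cinner (T x) y = cinner x (S' y)"
    show "S' = S"
    proof
      fix y
      show "S' y = S y"
      proof (rule cinner_ext)
        fix z
        show "cinner z (S' y) = cinner z (S y)" using S S' by metis
      qed
    qed
  qed
  then have "\<forall>x y. cinner (T x) y = cinner x (cadj T y)" unfolding cadj_def by (rule theI')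
  then show ?thesis by blast
qed

lemma sharpA_prop:
  fixes A T :: "'a::chilbert_space \<Rightarrow> 'a"
  assumes p: "positive_op A" and t: "in_BA A T"
  shows "bounded_op (sharpA A T) \<and> (\<forall>x y. cinner (A (T x)) y = cinner (A x) (sharpA A T y))"
proof -
  note bA = pos_bop[OF p]
  obtain W where bT: "bounded_op T" and bW: "bounded_op W" and W: "\<forall>x y. cinner (A (T x)) y = cinner (A x) (W y)"
    using t unfolding in_BA_def A_inner_def by blast
  define M where "M = closure (range A)"
  have cl: "closed M" unfolding M_def by simp
  have sub: "csubspace M" unfolding M_def by (rule closure_range_csubspace[OF bA])
  have AM: "A z \<in> M" for z unfolding M_def by (rule subsetD[OF closure_subset rangeI])
  have sa: "cinner (A u) v = cinner u (A v)" for u v by (rule pos_sa[OF p])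
  have AW: "A (W y) = cadj T (A y)" for y
  proof (rule cinner_ext)
    fix z
    have "cinner z (A (W y)) = cinner (A z) (W y)" by (simp add: sa)
    also have "\<dots> = cinner (A (T z)) y" using W by simp
    also have "\<dots> = cinner (T z) (A y)" by (simp add: sa)
    also have "\<dots> = cinner z (cadj T (A y))" by (rule cadj_prop[OF bT])
    finally show "cinner z (A (W y)) = cinner z (cadj T (A y))" .
  qed
  have AP: "A (proj M v) = A v" for v
  proof -
    define D where "D = v - proj M v"
    have orth: "cinner D m = 0" if "m \<in> M" for m
      using proj_prop[OF cl sub, of v] that unfolding D_def by blast
    have "A D = 0"
    proof (rule cinner_ext)
      fix z
      have "cinner z (A D) = cinner (A z) D" by (simp add: sa)
      also have "\<dots> = cnj (cinner D (A z))" by (rule cinner_commute)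
      also have "\<dots> = 0" using orth[OF AM] by simp
      finally show "cinner z (A D) = cinner z 0" by simp
    qed
    then show ?thesis unfolding D_def bop_diff[OF bA] by simp
  qed
  define X where "X = proj M \<circ> W"
  have PX: "bounded_op X \<and> (\<forall>x. A (X x) = cadj T (A x)) \<and> range X \<subseteq> closure (range A)"
  proof (intro conjI allI)
    show "bounded_op X" unfolding X_def by (rule bop_comp[OF proj_bop[OF cl sub] bW])
    show "A (X x) = cadj T (A x)" for x unfolding X_def by (simp add: AP AW)
    show "range X \<subseteq> closure (range A)"
    proof
      fix v assume "v \<in> range X"
      then obtain y where y: "v = X y" by blast
      have "proj M (W y) \<in> M" using proj_prop[OF cl sub] by blast
      then show "v \<in> closure (range A)" unfolding y X_def M_def by simp
    qed
  qed
  have uniq: "X' = X" if X': "bounded_op X' \<and> (\<forall>x. A (X' x) = cadj T (A x)) \<and> range X' \<subseteq> closure (range A)" for X'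
  proof
    fix y
    define D where "D = X' y - X y"
    have "A D = 0" unfolding D_def bop_diff[OF bA] using X' PX by simp
    have o1: "cinner m D = 0" if "m \<in> closure (range A)" for m
    proof (rule orth_closure[OF _ that])
      fix m' assume "m' \<in> range A"
      then obtain z where z: "m' = A z" by blast
      show "cinner m' D = 0" unfolding z sa \<open>A D = 0\<close> by simp
    qed
    have "X' y \<in> closure (range A)" "X y \<in> closure (range A)" using X' PX by blast+
    then have o2: "cinner (X' y) D = 0" "cinner (X y) D = 0" using o1 by blast+
    have "cinner D D = cinner (X' y) D - cinner (X y) D" by (simp only: D_def cinner_diff_left)
    then have "cinner D D = 0" using o2 by simp
    then have "D = 0" by (simp add: cinner_eq_zero_iff)
    then show "X' y = X y" unfolding D_def by simp
  qed
  have "\<exists>!X. bounded_op X \<and> (\<forall>x. A (X x) = cadj T (A x)) \<and> range X \<subseteq> closure (range A)"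
    by (rule ex1I[of _ X], rule PX, rule uniq)
  then have S: "bounded_op (sharpA A T) \<and> (\<forall>x. A (sharpA A T x) = cadj T (A x)) \<and> range (sharpA A T) \<subseteq> closure (range A)"
    unfolding sharpA_def by (rule theI')
  have "cinner (A (T x)) y = cinner (A x) (sharpA A T y)" for x y
  proof -
    have "cinner (A (T x)) y = cinner (T x) (A y)" by (rule sa)
    also have "\<dots> = cinner x (cadj T (A y))" by (rule cadj_prop[OF bT])
    also have "\<dots> = cinner x (A (sharpA A T y))" using S by simp
    also have "\<dots> = cinner (A x) (sharpA A T y)" by (simp add: sa)
    finally show ?thesis .
  qed
  then show ?thesis using S by blast
qed

definition A_adj :: "('a::complex_inner \<Rightarrow> 'a) \<Rightarrow> ('a \<Rightarrow> 'a) \<Rightarrow> ('a \<Rightarrow> 'a) \<Rightarrow> bool" where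
  "A_adj A T X \<longleftrightarrow> (\<forall>x y. cinner (A (T x)) y = cinner (A x) (X y))"

lemma A_adjD: "A_adj A T X \<Longrightarrow> cinner (A (T x)) y = cinner (A x) (X y)"
  unfolding A_adj_def by blast

lemma A_herm_sym: "positive_op A \<Longrightarrow> cinner (A x) y = cnj (cinner (A y) x)"
  using herm_sym[OF pos_herm] by blast

lemma Aadj_sym:
  assumes p: "positive_op A" and h: "A_adj A T X"
  shows "A_adj A X T"
  unfolding A_adj_def
proof (intro allI)
  fix u y
  have "cinner (A (X u)) y = cnj (cinner (A y) (X u))" by (rule A_herm_sym[OF p])
  also have "\<dots> = cnj (cinner (A (T y)) u)" by (simp add: A_adjD[OF h])
  also have "\<dots> = cinner (A u) (T y)" by (simp add: A_herm_sym[OF p, of u "T y"])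
  finally show "cinner (A (X u)) y = cinner (A u) (T y)" .
qed

lemma Aadj_comp:
  assumes "A_adj A T1 X1" "A_adj A T2 X2"
  shows "A_adj A (T1 \<circ> T2) (X2 \<circ> X1)"
  unfolding A_adj_def using assms by (simp add: A_adjD)

lemma Aadj_pow:
  assumes h: "A_adj A P P"
  shows "A_adj A (P ^^ n) (P ^^ n)"
proof (induct n)
  case 0 then show ?case unfolding A_adj_def by simp
next
  case (Suc n)
  have "A_adj A (P \<circ> P ^^ n) (P ^^ n \<circ> P)" by (rule Aadj_comp[OF h Suc])
  then show ?case by (simp only: funpow_Suc_right[symmetric] funpow.simps(2)[symmetric])
qed

lemma Aadj_pow_split:
  assumes h: "A_adj A P P"
  shows "cinner (A ((P ^^ (a + b)) x)) y = cinner (A ((P ^^ a) x)) ((P ^^ b) y)"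
proof -
  have "(P ^^ (a + b)) x = (P ^^ b) ((P ^^ a) x)" by (simp add: funpow_add add.commute[of a b])
  then show ?thesis using A_adjD[OF Aadj_pow[OF h, of b]] by simp
qed

lemma Aadj_sum:
  fixes F G :: "'i \<Rightarrow> 'a::complex_inner \<Rightarrow> 'a"
  assumes p: "positive_op A"
    and h: "\<And>i. i \<in> I \<Longrightarrow> A_adj A (F i) (F i) \<and> A_adj A (G i) (G i)"
  shows "A_adj A (\<lambda>x. \<Sum>i\<in>I. F i x + G i x) (\<lambda>x. \<Sum>i\<in>I. F i x + G i x)"
  unfolding A_adj_def
proof (intro allI)
  fix x y
  note bA = pos_bop[OF p]
  have "cinner (A (\<Sum>i\<in>I. F i x + G i x)) y = (\<Sum>i\<in>I. cinner (A (F i x)) y + cinner (A (G i x)) y)"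
    by (simp add: bop_sum[OF bA] bop_add[OF bA] cinner_sum_left cinner_add_left)
  also have "\<dots> = (\<Sum>i\<in>I. cinner (A x) (F i y) + cinner (A x) (G i y))"
  proof (rule sum.cong[OF refl])
    fix i assume "i \<in> I"
    then have "A_adj A (F i) (F i)" "A_adj A (G i) (G i)" using h by blast+
    then show "cinner (A (F i x)) y + cinner (A (G i x)) y = cinner (A x) (F i y) + cinner (A x) (G i y)"
      by (simp add: A_adjD)
  qed
  also have "\<dots> = cinner (A x) (\<Sum>i\<in>I. F i y + G i y)"
    by (simp add: cinner_sum_right cinner_add_right)
  finally show "cinner (A (\<Sum>i\<in>I. F i x + G i x)) y = cinner (A x) (\<Sum>i\<in>I. F i y + G i y)" .
qed

lemma P_herm:
  assumes p: "positive_op A" and bP: "bounded_op P" and h: "A_adj A P P"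
    and pos: "\<And>u. 0 \<le> Re (cinner (A (P u)) u)"
  shows "herm_form (\<lambda>u v. cinner (A (P u)) v)"
  unfolding herm_form_def
proof (intro conjI allI)
  note bA = pos_bop[OF p]
  show "cinner (A (P (x + y))) z = cinner (A (P x)) z + cinner (A (P y)) z" for x y z
    by (simp add: bop_add[OF bP] bop_add[OF bA] cinner_add_left)
  show "cinner (A (P (scaleC c x))) y = c * cinner (A (P x)) y" for c x y
    by (simp add: bop_scaleC[OF bP] bop_scaleC[OF bA] cinner_scaleC_left)
  show "cinner (A (P x)) y = cnj (cinner (A (P y)) x)" for x y
  proof -
    have "cinner (A (P x)) y = cinner (A x) (P y)" by (rule A_adjD[OF h])
    also have "\<dots> = cnj (cinner (A (P y)) x)" by (rule A_herm_sym[OF p])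
    finally show ?thesis .
  qed
  show "0 \<le> Re (cinner (A (P x)) x)" for x by (rule pos)
qed

lemma A_norm_sq: "positive_op A \<Longrightarrow> (A_norm A v)^2 = Re (cinner (A v) v)"
proof -
  assume p: "positive_op A"
  have "0 \<le> Re (cinner (A v) v)" using p unfolding positive_op_def by blast
  then show ?thesis unfolding A_norm_def by simp
qed

lemma A_norm_nonneg: "positive_op A \<Longrightarrow> 0 \<le> A_norm A v"
proof -
  assume p: "positive_op A"
  have "0 \<le> Re (cinner (A v) v)" using p unfolding positive_op_def by blast
  then show ?thesis unfolding A_norm_def by simp
qed

lemma A_CS: "positive_op A \<Longrightarrow> cmod (cinner (A u) v) \<le> A_norm A u * A_norm A v"
  unfolding A_norm_def using herm_CS'[OF pos_herm] by blast

lemma A_CS2: "positive_op A \<Longrightarrow> (cmod (cinner (A u) v))^2 \<le> (A_norm A u)^2 * (A_norm A v)^2"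
  using herm_CS[OF pos_herm] A_norm_sq by metis

lemma logconvex_aux:
  fixes g :: "nat \<Rightarrow> real"
  assumes g0: "g 0 = 1" and nn: "\<And>j. 0 \<le> g j"
    and lc: "\<And>j. (g (Suc j))^2 \<le> g j * g (Suc (Suc j))"
  shows "g k ^ Suc k \<le> g (Suc k) ^ k"
proof (induct k)
  case 0 then show ?case using g0 by simp
next
  case (Suc k)
  have "g (Suc k) ^ (2 * Suc k) = ((g (Suc k))^2) ^ Suc k" by (rule power_mult)
  also have "\<dots> \<le> (g k * g (Suc (Suc k))) ^ Suc k" by (rule power_mono[OF lc]) simp
  also have "\<dots> = g k ^ Suc k * g (Suc (Suc k)) ^ Suc k" by (simp add: power_mult_distrib)
  also have "\<dots> \<le> g (Suc k) ^ k * g (Suc (Suc k)) ^ Suc k"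
    by (rule mult_right_mono[OF Suc]) (simp add: nn)
  finally have *: "g (Suc k) ^ (2 * Suc k) \<le> g (Suc k) ^ k * g (Suc (Suc k)) ^ Suc k" .
  show ?case
  proof (cases "g (Suc k) = 0")
    case True then show ?thesis using nn by simp
  next
    case False
    then have pos: "0 < g (Suc k) ^ k" using nn by (simp add: order_le_neq_trans)
    have eq: "g (Suc k) ^ (2 * Suc k) = g (Suc k) ^ k * g (Suc k) ^ Suc (Suc k)"
    proof -
      have "2 * Suc k = k + Suc (Suc k)" by simp
      then show ?thesis by (simp only: power_add)
    qed
    have "g (Suc k) ^ k * g (Suc k) ^ Suc (Suc k) \<le> g (Suc k) ^ k * g (Suc (Suc k)) ^ Suc k"
      using * unfolding eq .
    then show ?thesis using pos by (rule mult_left_le_imp_le)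
  qed
qed

lemma logconvex_pow:
  fixes g :: "nat \<Rightarrow> real"
  assumes g0: "g 0 = 1" and nn: "\<And>j. 0 \<le> g j"
    and lc: "\<And>j. (g (Suc j))^2 \<le> g j * g (Suc (Suc j))"
  shows "g 1 ^ n \<le> g n"
proof (induct n)
  case 0 then show ?case using g0 by simp
next
  case (Suc n)
  show ?case
  proof (cases n)
    case 0 then show ?thesis by simp
  next
    case (Suc m)
    have "(g 1 ^ Suc n) ^ n = (g 1 ^ n) ^ Suc n" by (metis power_mult mult.commute)
    also have "\<dots> \<le> g n ^ Suc n" by (rule power_mono[OF Suc.hyps]) (simp add: nn)
    also have "\<dots> \<le> g (Suc n) ^ n" by (rule logconvex_aux[OF g0 nn lc])
    finally have "(g 1 ^ Suc n) ^ Suc m \<le> g (Suc n) ^ Suc m" using Suc by simp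
    then show ?thesis by (rule power_le_imp_le_base) (simp add: nn)
  qed
qed

lemma power_mean2:
  fixes p q :: real
  assumes "0 \<le> p" "0 \<le> q"
  shows "((p + q) / 2) ^ n \<le> (p ^ n + q ^ n) / 2"
proof (induct n)
  case 0 then show ?case by simp
next
  case (Suc n)
  have key: "(p ^ n + q ^ n) * (p + q) \<le> 2 * (p ^ Suc n + q ^ Suc n)"
  proof -
    have "0 \<le> (q ^ n - p ^ n) * (q - p)"
    proof (cases "p \<le> q")
      case True
      then have "p ^ n \<le> q ^ n" using assms by (simp add: power_mono)
      then show ?thesis using True by simp
    next
      case False
      then have "q ^ n \<le> p ^ n" using assms by (simp add: power_mono)
      then show ?thesis using False by (simp add: mult_nonpos_nonpos)
    qed
    moreover have "2 * (p ^ Suc n + q ^ Suc n) - (p ^ n + q ^ n) * (p + q) = (q ^ n - p ^ n) * (q - p)"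
      by (simp add: algebra_simps)
    ultimately show ?thesis by linarith
  qed
  have "((p + q) / 2) ^ Suc n = ((p + q) / 2) ^ n * ((p + q) / 2)" by simp
  also have "\<dots> \<le> (p ^ n + q ^ n) / 2 * ((p + q) / 2)"
    by (rule mult_right_mono[OF Suc]) (use assms in simp)
  also have "\<dots> = ((p ^ n + q ^ n) * (p + q)) / 4" by simp
  also have "\<dots> \<le> (2 * (p ^ Suc n + q ^ Suc n)) / 4" using key by (rule divide_right_mono) simp
  also have "\<dots> = (p ^ Suc n + q ^ Suc n) / 2" by simp
  finally show ?case .
qed

lemma sum_power_le:
  fixes c :: "'i \<Rightarrow> real"
  assumes fin: "finite I" and ne: "I \<noteq> {}" and nn: "\<And>i. i \<in> I \<Longrightarrow> 0 \<le> c i" and n: "n \<ge> 1"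
  shows "(\<Sum>i\<in>I. c i) ^ (2 * n) \<le> real (card I) ^ (2 * n - 1) * (\<Sum>i\<in>I. c i ^ (2 * n))"
proof -
  define k where "k = real (card I)"
  have kpos: "k > 0" unfolding k_def using fin ne by (simp add: card_gt_0_iff)
  have cv: "convex_on UNIV (\<lambda>x::real. x ^ (2 * n))" by (rule convex_power_even) simp
  have "(\<lambda>x::real. x ^ (2 * n)) (\<Sum>i\<in>I. (1 / k) *\<^sub>R c i) \<le> (\<Sum>i\<in>I. (1 / k) * (\<lambda>x. x ^ (2 * n)) (c i))"
    by (rule convex_on_sum[OF fin ne cv]) (use kpos in \<open>auto simp: k_def\<close>)
  then have "((\<Sum>i\<in>I. c i) / k) ^ (2 * n) \<le> (\<Sum>i\<in>I. c i ^ (2 * n)) / k"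
    by (simp add: sum_divide_distrib[symmetric] sum_distrib_left[symmetric])
  then have "(\<Sum>i\<in>I. c i) ^ (2 * n) / k ^ (2 * n) \<le> (\<Sum>i\<in>I. c i ^ (2 * n)) / k"
    by (simp add: power_divide)
  then have "(\<Sum>i\<in>I. c i) ^ (2 * n) \<le> (\<Sum>i\<in>I. c i ^ (2 * n)) / k * k ^ (2 * n)"
    using kpos by (simp add: divide_le_eq)
  also have "k ^ (2 * n) = k * k ^ (2 * n - 1)" using n by (simp add: power_eq_if)
  also have "(\<Sum>i\<in>I. c i ^ (2 * n)) / k * (k * k ^ (2 * n - 1)) = k ^ (2 * n - 1) * (\<Sum>i\<in>I. c i ^ (2 * n))"
    using kpos by simp
  finally show ?thesis unfolding k_def .
qed

section \<open>McCarthy-type inequality\<close>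

lemma Re_sq_le: "(Re z)^2 \<le> (cmod z)^2"
  by (simp add: cmod_power2)

lemma mccarthy:
  assumes p: "positive_op A" and bP: "bounded_op P" and h: "A_adj A P P"
    and pos: "\<And>u. 0 \<le> Re (cinner (A (P u)) u)" and x1: "A_norm A x = 1"
  shows "(Re (cinner (A (P x)) x)) ^ n \<le> Re (cinner (A ((P ^^ n) x)) x)"
proof -
  define g where "g j = Re (cinner (A ((P ^^ j) x)) x)" for j
  note HA = pos_herm[OF p]
  note HP = P_herm[OF p bP h pos]
  have split: "cinner (A ((P ^^ (a + b)) x)) x = cinner (A ((P ^^ a) x)) ((P ^^ b) x)" for a b
    by (rule Aadj_pow_split[OF h])
  have g_even: "g (m + m) = Re (cinner (A ((P ^^ m) x)) ((P ^^ m) x))" for m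
    unfolding g_def split ..
  have g_odd: "g (Suc m + m) = Re (cinner (A (P ((P ^^ m) x))) ((P ^^ m) x))" for m
    unfolding g_def split by simp
  have g0: "g 0 = 1"
  proof -
    have "g 0 = (A_norm A x)^2" unfolding g_def A_norm_sq[OF p] by simp
    then show ?thesis using x1 by simp
  qed
  have nn: "0 \<le> g j" for j
  proof (cases "even j")
    case True
    then obtain m where "j = m + m" by (metis evenE mult_2)
    then show ?thesis using g_even herm_pos[OF HA] by simp
  next
    case False
    then obtain m where "j = Suc m + m" by (metis oddE mult_2 add_Suc add.commute plus_1_eq_Suc)
    then show ?thesis using g_odd pos by simp
  qed
  have lc: "(g (Suc j))^2 \<le> g j * g (Suc (Suc j))" for j
  proof (cases "even j")
    case True
    then obtain m where m: "j = m + m" by (metis evenE mult_2)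
    define u where "u = (P ^^ m) x"
    define v where "v = (P ^^ Suc m) x"
    have e1: "g (Suc j) = Re (cinner (A (P u)) u)" unfolding m u_def using g_odd by simp
    have e0: "g j = Re (cinner (A u) u)" unfolding m u_def using g_even by simp
    have e2: "g (Suc (Suc j)) = Re (cinner (A v) v)"
    proof -
      have "Suc (Suc j) = Suc m + Suc m" using m by simp
      then have "g (Suc (Suc j)) = g (Suc m + Suc m)" by (simp only:)
      also have "\<dots> = Re (cinner (A v) v)" unfolding v_def by (rule g_even)
      finally show ?thesis .
    qed
    have "g (Suc j) = Re (cinner (A u) v)"
    proof -
      have "cinner (A (P u)) u = cinner (A u) (P u)" by (rule A_adjD[OF h])
      then show ?thesis unfolding e1 v_def u_def by simp
    qed
    then have "(g (Suc j))^2 \<le> (cmod (cinner (A u) v))^2"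
      using Re_sq_le by simp
    also have "\<dots> \<le> Re (cinner (A u) u) * Re (cinner (A v) v)" using herm_CS[OF HA, of u v] by simp
    finally show ?thesis unfolding e0 e2 .
  next
    case False
    then obtain m where m: "j = Suc m + m" by (metis oddE mult_2 add_Suc add.commute plus_1_eq_Suc)
    define u where "u = (P ^^ m) x"
    define v where "v = (P ^^ Suc m) x"
    have e0: "g j = Re (cinner (A (P u)) u)" unfolding m u_def using g_odd by simp
    have e1: "g (Suc j) = Re (cinner (A v) v)"
    proof -
      have "Suc j = Suc m + Suc m" using m by simp
      then have "g (Suc j) = g (Suc m + Suc m)" by (simp only:)
      also have "\<dots> = Re (cinner (A v) v)" unfolding v_def by (rule g_even)
      finally show ?thesis .
    qed
    have e2: "g (Suc (Suc j)) = Re (cinner (A (P v)) v)"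
    proof -
      have "Suc (Suc j) = Suc (Suc m) + Suc m" using m by simp
      then have "g (Suc (Suc j)) = g (Suc (Suc m) + Suc m)" by (simp only:)
      also have "\<dots> = Re (cinner (A (P v)) v)" unfolding v_def by (rule g_odd)
      finally show ?thesis .
    qed
    have "g (Suc j) = Re (cinner (A (P u)) v)" unfolding e1 v_def u_def by simp
    then have "(g (Suc j))^2 \<le> (cmod (cinner (A (P u)) v))^2"
      using Re_sq_le by simp
    also have "\<dots> \<le> Re (cinner (A (P u)) u) * Re (cinner (A (P v)) v)" using herm_CS[OF HP, of u v] by simp
    finally show ?thesis unfolding e0 e2 .
  qed
  have "g 1 ^ n \<le> g n" by (rule logconvex_pow[OF g0 nn lc])
  then show ?thesis unfolding g_def by simp
qed

section \<open>A-boundedness of A-selfadjoint operators\<close>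

lemma A_norm_le_norm:
  assumes p: "positive_op A"
  shows "\<exists>C>0. \<forall>v. A_norm A v \<le> C * norm v"
proof -
  obtain KA where KA: "KA > 0" "\<forall>x. norm (A x) \<le> KA * norm x" using bop_bound[OF pos_bop[OF p]] by blast
  have "(A_norm A v)^2 \<le> (sqrt KA * norm v)^2" for v
  proof -
    have "(A_norm A v)^2 = Re (cinner (A v) v)" by (rule A_norm_sq[OF p])
    also have "\<dots> \<le> cmod (cinner (A v) v)" by (rule complex_Re_le_cmod)
    also have "\<dots> \<le> norm (A v) * norm v" by (rule cinner_CS)
    also have "\<dots> \<le> (KA * norm v) * norm v" using KA(2) by (intro mult_right_mono) auto
    also have "\<dots> = (sqrt KA * norm v)^2" using KA(1) by (simp add: power2_eq_square power_mult_distrib)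
    finally show ?thesis .
  qed
  then have "A_norm A v \<le> sqrt KA * norm v" for v
    by (rule power2_le_imp_le) (use KA(1) in simp)
  then show ?thesis using KA(1) by (intro exI[of _ "sqrt KA"]) auto
qed

lemma A_bounded_sa:
  assumes p: "positive_op A" and bQ: "bounded_op Q" and h: "A_adj A Q Q"
  shows "\<exists>K. \<forall>x. A_norm A x = 1 \<longrightarrow> A_norm A (Q x) \<le> K"
proof -
  obtain K where K: "K > 0" "\<forall>x. norm (Q x) \<le> K * norm x" using bop_bound[OF bQ] by blast
  obtain C where C: "C > 0" "\<forall>v. A_norm A v \<le> C * norm v" using A_norm_le_norm[OF p] by blast
  have powb: "norm ((Q ^^ N) x) \<le> K ^ N * norm x" for N x
  proof (induct N)
    case 0 then show ?case by simp
  next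
    case (Suc N)
    have "norm ((Q ^^ Suc N) x) = norm (Q ((Q ^^ N) x))" by simp
    also have "\<dots> \<le> K * norm ((Q ^^ N) x)" using K(2) by blast
    also have "\<dots> \<le> K * (K ^ N * norm x)" using Suc K(1) by (intro mult_left_mono) auto
    finally show ?case by simp
  qed
  have "A_norm A (Q x) \<le> K" if x1: "A_norm A x = 1" for x
  proof -
    have step: "(A_norm A ((Q ^^ j) x))^2 \<le> A_norm A ((Q ^^ (j + j)) x)" for j
    proof -
      have "(A_norm A ((Q ^^ j) x))^2 = Re (cinner (A ((Q ^^ j) x)) ((Q ^^ j) x))" by (rule A_norm_sq[OF p])
      also have "\<dots> = Re (cinner (A ((Q ^^ (j + j)) x)) x)" by (simp only: Aadj_pow_split[OF h])
      also have "\<dots> \<le> cmod (cinner (A ((Q ^^ (j + j)) x)) x)" by (rule complex_Re_le_cmod)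
      also have "\<dots> \<le> A_norm A ((Q ^^ (j + j)) x) * A_norm A x" by (rule A_CS[OF p])
      finally show ?thesis using x1 by simp
    qed
    have pw: "(A_norm A (Q x)) ^ (2 ^ m) \<le> A_norm A ((Q ^^ (2 ^ m)) x)" for m
    proof (induct m)
      case 0 then show ?case by simp
    next
      case (Suc m)
      have "(A_norm A (Q x)) ^ (2 ^ Suc m) = ((A_norm A (Q x)) ^ (2 ^ m))^2"
        by (simp add: power_mult[symmetric] mult.commute)
      also have "\<dots> \<le> (A_norm A ((Q ^^ (2 ^ m)) x))^2"
        by (rule power_mono[OF Suc]) (simp add: A_norm_nonneg[OF p] zero_le_power)
      also have "\<dots> \<le> A_norm A ((Q ^^ (2 ^ m + 2 ^ m)) x)" by (rule step)
      also have "2 ^ m + 2 ^ m = (2::nat) ^ Suc m" by simp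
      finally show ?case .
    qed
    have bnd: "(A_norm A (Q x) / K) ^ (2 ^ m) \<le> C * norm x" for m
    proof -
      have "(A_norm A (Q x)) ^ (2 ^ m) \<le> C * norm ((Q ^^ (2 ^ m)) x)"
        using pw[of m] C(2) by (meson order_trans)
      also have "\<dots> \<le> C * (K ^ (2 ^ m) * norm x)" using powb C(1) by (intro mult_left_mono) auto
      finally have "(A_norm A (Q x)) ^ (2 ^ m) \<le> K ^ (2 ^ m) * (C * norm x)" by (simp add: mult_ac)
      then show ?thesis using K(1) by (simp add: power_divide divide_le_eq mult.commute)
    qed
    show ?thesis
    proof (rule ccontr)
      assume "\<not> A_norm A (Q x) \<le> K"
      then have r1: "1 < A_norm A (Q x) / K" using K(1) by simp
      obtain N where N: "C * norm x < (A_norm A (Q x) / K) ^ N" using real_arch_pow[OF r1] by blast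
      have "N < 2 ^ N" by (rule less_exp)
      then have "(A_norm A (Q x) / K) ^ N \<le> (A_norm A (Q x) / K) ^ (2 ^ N)"
        using r1 by (intro power_increasing) auto
      then show False using N bnd[of N] by simp
    qed
  qed
  then show ?thesis by blast
qed

lemma one_op:
  assumes p: "positive_op A" and bT: "bounded_op T" and bX: "bounded_op X" and h: "A_adj A T X"
    and x1: "A_norm A x = 1"
  shows "(cmod (cinner (A (T x)) x)) ^ (2 * n) \<le> 1/2 * Re (cinner (A (((X \<circ> T) ^^ n) x + ((T \<circ> X) ^^ n) x)) x)"
proof -
  note bA = pos_bop[OF p]
  have h': "A_adj A X T" by (rule Aadj_sym[OF p h])
  define c where "c = cmod (cinner (A (T x)) x)"
  define P1 where "P1 = X \<circ> T"
  define P2 where "P2 = T \<circ> X"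
  have a1: "A_adj A P1 P1" unfolding P1_def by (rule Aadj_comp[OF h' h])
  have a2: "A_adj A P2 P2" unfolding P2_def by (rule Aadj_comp[OF h h'])
  have b1: "bounded_op P1" unfolding P1_def by (rule bop_comp[OF bX bT])
  have b2: "bounded_op P2" unfolding P2_def by (rule bop_comp[OF bT bX])
  have e1: "cinner (A (P1 u)) u = cinner (A (T u)) (T u)" for u
    unfolding P1_def comp_def by (rule A_adjD[OF h'])
  have e2: "cinner (A (P2 u)) u = cinner (A (X u)) (X u)" for u
    unfolding P2_def comp_def by (rule A_adjD[OF h])
  have pos1: "0 \<le> Re (cinner (A (P1 u)) u)" for u unfolding e1 using p unfolding positive_op_def by blast
  have pos2: "0 \<le> Re (cinner (A (P2 u)) u)" for u unfolding e2 using p unfolding positive_op_def by blast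
  define pp where "pp = Re (cinner (A (P1 x)) x)"
  define qq where "qq = Re (cinner (A (P2 x)) x)"
  have pp0: "0 \<le> pp" unfolding pp_def by (rule pos1)
  have qq0: "0 \<le> qq" unfolding qq_def by (rule pos2)
  have c0: "0 \<le> c" unfolding c_def by simp
  have cp: "c^2 \<le> pp"
  proof -
    have "c^2 \<le> (A_norm A (T x))^2 * (A_norm A x)^2" unfolding c_def by (rule A_CS2[OF p])
    also have "\<dots> = pp" unfolding pp_def e1 A_norm_sq[OF p] x1 by simp
    finally show ?thesis .
  qed
  have cq: "c^2 \<le> qq"
  proof -
    have "c = cmod (cinner (A x) (X x))" unfolding c_def by (simp add: A_adjD[OF h])
    also have "(cmod (cinner (A x) (X x)))^2 \<le> (A_norm A x)^2 * (A_norm A (X x))^2" by (rule A_CS2[OF p])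
    also have "\<dots> = qq" unfolding qq_def e2 A_norm_sq[OF p] x1 by simp
    finally show ?thesis by simp
  qed
  have c2: "c^2 \<le> (pp + qq) / 2" using cp cq by simp
  have "c ^ (2 * n) = (c^2) ^ n" by (simp add: power_mult)
  also have "\<dots> \<le> ((pp + qq) / 2) ^ n" by (rule power_mono[OF c2]) simp
  also have "\<dots> \<le> (pp ^ n + qq ^ n) / 2" by (rule power_mean2[OF pp0 qq0])
  also have "\<dots> \<le> (Re (cinner (A ((P1 ^^ n) x)) x) + Re (cinner (A ((P2 ^^ n) x)) x)) / 2"
    unfolding pp_def qq_def
    using mccarthy[OF p b1 a1 pos1 x1, of n] mccarthy[OF p b2 a2 pos2 x1, of n] by simp
  also have "\<dots> = 1/2 * Re (cinner (A ((P1 ^^ n) x + (P2 ^^ n) x)) x)"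
    by (simp add: bop_add[OF bA] cinner_add_left)
  finally show ?thesis unfolding c_def P1_def P2_def .
qed

lemma exists_unit:
  assumes p: "positive_op A" and nz: "A \<noteq> (\<lambda>x. 0)"
  shows "\<exists>x. A_norm A x = 1"
proof -
  obtain z where z: "A z \<noteq> 0" using nz by blast
  define a where "a = Re (cinner (A z) z)"
  have a0: "0 \<le> a" unfolding a_def using p unfolding positive_op_def by blast
  have "(cmod (cinner (A z) (A z)))^2 \<le> Re (cinner (A z) z) * Re (cinner (A (A z)) (A z))"
    using herm_CS[OF pos_herm[OF p], of z "A z"] by simp
  moreover have "cmod (cinner (A z) (A z)) > 0" using z by (simp add: cinner_eq_zero_iff)
  ultimately have "a \<noteq> 0" unfolding a_def by auto
  then have apos: "a > 0" using a0 by simp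
  define x where "x = scaleR (1 / sqrt a) z"
  have "Re (cinner (A x) x) = (1 / sqrt a)^2 * a"
    unfolding x_def a_def
    by (simp add: bop_scaleR[OF pos_bop[OF p]] cinner_scaleR_left cinner_scaleR_right power2_eq_square)
  also have "\<dots> = 1"
  proof -
    have "(sqrt a)^2 = a" using a0 by simp
    then have "(1 / sqrt a)^2 = 1 / a" by (simp add: power_divide)
    then show ?thesis using apos by simp
  qed
  finally have "A_norm A x = 1" unfolding A_norm_def by simp
  then show ?thesis by blast
qed

theorem theorem3p12:
  fixes A :: "'a::chilbert_space \<Rightarrow> 'a"
    and S :: "nat \<Rightarrow> 'a \<Rightarrow> 'a"
    and k n :: nat
  assumes "positive_op A"
    and "A \<noteq> (\<lambda>x. 0)"
    and "k \<ge> 1"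
    and "\<forall>i\<in>{1..k}. in_BA A (S i)"
    and "n \<ge> 1"
  shows "A_numrad A (\<lambda>x. \<Sum>i=1..k. S i x) ^ (2 * n)
     \<le> real k ^ (2 * n - 1) / 2 *
        A_opnorm A (\<lambda>x. \<Sum>i=1..k. ((sharpA A (S i) \<circ> S i) ^^ n) x
                                   + ((S i \<circ> sharpA A (S i)) ^^ n) x)"
proof -
  note p = assms(1)
  note bA = pos_bop[OF p]
  define T where "T = (\<lambda>x. \<Sum>i=1..k. S i x)"
  define X where "X i = sharpA A (S i)" for i
  define Q where "Q = (\<lambda>x. \<Sum>i=1..k. ((sharpA A (S i) \<circ> S i) ^^ n) x + ((S i \<circ> sharpA A (S i)) ^^ n) x)"
  have bS: "bounded_op (S i)" if "i \<in> {1..k}" for i using assms(4) that unfolding in_BA_def by blast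
  have sh: "bounded_op (X i) \<and> A_adj A (S i) (X i)" if "i \<in> {1..k}" for i
    using sharpA_prop[OF p, of "S i"] assms(4) that unfolding X_def A_adj_def by blast
  have bQ: "bounded_op Q"
    unfolding Q_def
  proof (rule bop_sum_op)
    fix i assume i: "i \<in> {1..k}"
    have bX: "bounded_op (sharpA A (S i))" using sh[OF i] unfolding X_def by blast
    show "bounded_op (\<lambda>x. ((sharpA A (S i) \<circ> S i) ^^ n) x + ((S i \<circ> sharpA A (S i)) ^^ n) x)"
      by (intro bop_plus bop_funpow bop_comp bX bS[OF i])
  qed
  have aQ: "A_adj A Q Q"
    unfolding Q_def
  proof (rule Aadj_sum[OF p])
    fix i assume i: "i \<in> {1..k}"
    have h: "A_adj A (S i) (sharpA A (S i))" using sh[OF i] unfolding X_def by blast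
    have h': "A_adj A (sharpA A (S i)) (S i)" by (rule Aadj_sym[OF p h])
    show "A_adj A ((sharpA A (S i) \<circ> S i) ^^ n) ((sharpA A (S i) \<circ> S i) ^^ n) \<and>
          A_adj A ((S i \<circ> sharpA A (S i)) ^^ n) ((S i \<circ> sharpA A (S i)) ^^ n)"
      by (intro conjI Aadj_pow Aadj_comp h h')
  qed
  obtain KQ where KQ: "\<forall>x. A_norm A x = 1 \<longrightarrow> A_norm A (Q x) \<le> KQ"
    using A_bounded_sa[OF p bQ aQ] by blast
  have bddQ: "bdd_above {A_norm A (Q x) | x. A_norm A x = 1}"
    using KQ by (intro bdd_aboveI[of _ KQ]) blast
  define R where "R = real k ^ (2 * n - 1) / 2 * A_opnorm A Q"
  have key: "(cmod (A_inner A (T x) x)) ^ (2 * n) \<le> R" if x1: "A_norm A x = 1" for x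
  proof -
    define c where "c i = cmod (cinner (A (S i x)) x)" for i
    have c0: "0 \<le> c i" for i unfolding c_def by simp
    have e1: "cmod (A_inner A (T x) x) \<le> (\<Sum>i=1..k. c i)"
    proof -
      have "A_inner A (T x) x = (\<Sum>i=1..k. cinner (A (S i x)) x)"
        unfolding A_inner_def T_def by (simp add: bop_sum[OF bA] cinner_sum_left)
      then show ?thesis unfolding c_def by (simp add: norm_sum)
    qed
    have one: "(c i) ^ (2 * n) \<le> 1/2 * Re (cinner (A (((sharpA A (S i) \<circ> S i) ^^ n) x + ((S i \<circ> sharpA A (S i)) ^^ n) x)) x)"
      if i: "i \<in> {1..k}" for i
    proof -
      have bX: "bounded_op (sharpA A (S i))" and h: "A_adj A (S i) (sharpA A (S i))"
        using sh[OF i] unfolding X_def by blast+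
      show ?thesis unfolding c_def by (rule one_op[OF p bS[OF i] bX h x1])
    qed
    have kk: "0 \<le> real k ^ (2 * n - 1)" by simp
    have "(cmod (A_inner A (T x) x)) ^ (2 * n) \<le> (\<Sum>i=1..k. c i) ^ (2 * n)"
      by (rule power_mono[OF e1]) simp
    also have "\<dots> \<le> real (card {1..k}) ^ (2 * n - 1) * (\<Sum>i=1..k. c i ^ (2 * n))"
      by (rule sum_power_le) (use assms(3,5) c0 in auto)
    also have "\<dots> = real k ^ (2 * n - 1) * (\<Sum>i=1..k. c i ^ (2 * n))" by simp
    also have "\<dots> \<le> real k ^ (2 * n - 1) * (\<Sum>i=1..k. 1/2 * Re (cinner (A (((sharpA A (S i) \<circ> S i) ^^ n) x + ((S i \<circ> sharpA A (S i)) ^^ n) x)) x))"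
      by (rule mult_left_mono[OF sum_mono[OF one] kk])
    also have "(\<Sum>i=1..k. 1/2 * Re (cinner (A (((sharpA A (S i) \<circ> S i) ^^ n) x + ((S i \<circ> sharpA A (S i)) ^^ n) x)) x))
        = 1/2 * Re (cinner (A (Q x)) x)"
      unfolding Q_def by (simp add: bop_sum[OF bA] cinner_sum_left sum_distrib_left)
    also have "Re (cinner (A (Q x)) x) \<le> A_opnorm A Q"
    proof -
      have "Re (cinner (A (Q x)) x) \<le> cmod (cinner (A (Q x)) x)" by (rule complex_Re_le_cmod)
      also have "\<dots> \<le> A_norm A (Q x) * A_norm A x" by (rule A_CS[OF p])
      also have "\<dots> = A_norm A (Q x)" using x1 by simp
      also have "\<dots> \<le> A_opnorm A Q" unfolding A_opnorm_def
        by (rule cSup_upper[OF _ bddQ]) (use x1 in blast)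
      finally show ?thesis .
    qed
    then have "real k ^ (2 * n - 1) * (1/2 * Re (cinner (A (Q x)) x)) \<le> R"
      unfolding R_def using kk by (simp add: mult_left_mono)
    finally show ?thesis .
  qed
  define N where "N = {cmod (A_inner A (T x) x) | x. A_norm A x = 1}"
  obtain x0 where x0: "A_norm A x0 = 1" using exists_unit[OF p assms(2)] by blast
  have Nne: "N \<noteq> {}" unfolding N_def using x0 by blast
  have R0: "0 \<le> R" using key[OF x0] by (meson order_trans zero_le_power norm_ge_zero)
  define r where "r = root (2 * n) R"
  have n2: "0 < 2 * n" using assms(5) by simp
  have rpow: "r ^ (2 * n) = R" unfolding r_def by (rule real_root_pow_pos2[OF n2 R0])
  have r0: "0 \<le> r" unfolding r_def by (rule real_root_ge_zero[OF R0])
  have le_r: "e \<le> r" if eN: "e \<in> N" for e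
  proof -
    obtain x where x: "A_norm A x = 1" "e = cmod (A_inner A (T x) x)" using eN unfolding N_def by blast
    have "e ^ (2 * n) \<le> r ^ (2 * n)" using key[OF x(1)] rpow x(2) by simp
    moreover have "2 * n = Suc (2 * n - 1)" using n2 by simp
    ultimately have "e ^ Suc (2 * n - 1) \<le> r ^ Suc (2 * n - 1)" by simp
    then show ?thesis using r0 by (rule power_le_imp_le_base)
  qed
  have supr: "Sup N \<le> r" by (rule cSup_least[OF Nne le_r])
  have sup0: "0 \<le> Sup N"
  proof -
    have "cmod (A_inner A (T x0) x0) \<in> N" unfolding N_def using x0 by blast
    moreover have "bdd_above N" using le_r by (intro bdd_aboveI[of _ r]) blast
    ultimately have "cmod (A_inner A (T x0) x0) \<le> Sup N" by (rule cSup_upper)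
    then show ?thesis by (meson order_trans norm_ge_zero)
  qed
  have "Sup N ^ (2 * n) \<le> r ^ (2 * n)" by (rule power_mono[OF supr sup0])
  then have "A_numrad A T ^ (2 * n) \<le> R" unfolding A_numrad_def N_def[symmetric] rpow .
  then show ?thesis unfolding T_def R_def Q_def .
qed

end
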